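(* Let $U:\mathbb{R}^d\to\mathbb{R}$ be twice differentiable with $\mu\mathrm{I}_d\preceq\nabla^2U(z)\preceq L\mathrm{I}_d$ for all $z$, where $\mu\in(0,+\infty)$, $L\in[0,+\infty)$. Then for any $\lambda\in\Lambda$ and $\lambda_*=\arg\min_{\lambda'\in\Lambda}\mathcal{F}(q_{\lambda'})$, $$\langle\nabla\mathcal{E}(\lambda)-\nabla\mathcal{E}(\lambda_* ),\lambda-\lambda_*\rangle\ge\frac\mu2\|\lambda-\lambda_*\|_2^2+\mathrm{D}_{\lambda'\mapsto\mathcal{E}(q_{\lambda'})}(\lambda,\lambda_* ),$$ where $\nabla\mathcal{E}(\lambda)$ denotes the gradient of $\lambda\mapsto\mathcal{E}(q_\lambda)$.
   Context: $\mathcal{E}(q)=\int U\,\mathrm{d}q$, $\mathcal{H}(q)=\int\log q\,\mathrm{d}q$, $\mathcal{F}=\mathcal{E}+\mathcal{H}$. Parameters $\lambda=(m,C)$ with $m\in\mathbb{R}^d$ and $C$ lower-triangular $d\times d$ with strictly positive diagonal ($\Lambda$ is the set of these), inner product $\langle(m,C),(m',C')\rangle=m^\top m'+\mathrm{tr}(C^\top C')$ with norm $\|\cdot\|_2$, and $q_\lambda=\mathrm{Normal}(m,CC^\top)$. For differentiable $f$, $\mathrm{D}_f(\lambda,\lambda')=f(\lambda)-f(\lambda')-\langle\nabla f(\lambda'),\lambda-\lambda'\rangle$. *)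

theory Defs
  imports "HOL-Probability.Probability"
begin

text \<open>Dimension d is the cardinality of the finite, well-ordered index type 'n.
  A parameter lambda = (m, C) lives in real^'n \<times> real^'n^'n; the product inner
  product is m \<bullet> m' + C \<bullet> C' = m^T m' + tr(C^T C').\<close>

definition lower_tri_pos :: "real^('n::{finite,wellorder})^('n::{finite,wellorder}) \<Rightarrow> bool" where
  "lower_tri_pos C \<longleftrightarrow> (\<forall>i j. i < j \<longrightarrow> C $ i $ j = 0) \<and> (\<forall>i. C $ i $ i > 0)"

definition Lambda_set :: "((real^('n::{finite,wellorder})) \<times> (real^('n::{finite,wellorder})^('n::{finite,wellorder}))) set" where
  "Lambda_set = {(m, C). lower_tri_pos C}"

definition std_gauss :: "(real^'n::finite) measure" where
  "std_gauss = density lborel (\<lambda>x. ennreal (\<Prod>i\<in>UNIV. std_normal_density (x $ i)))"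

text \<open>q_lambda = Normal(m, C C^T), the law of m + C Z with Z standard Gaussian.\<close>
definition q_param :: "(real^'n::finite) \<times> (real^'n^'n) \<Rightarrow> (real^'n) measure" where
  "q_param lam = distr std_gauss borel (\<lambda>u. fst lam + snd lam *v u)"

definition energy :: "((real^'n::finite) \<Rightarrow> real) \<Rightarrow> (real^'n) measure \<Rightarrow> real" where
  "energy U q = integral\<^sup>L q U"

definition entropy_neg :: "(real^'n::finite) measure \<Rightarrow> real" where
  "entropy_neg q = integral\<^sup>L q (\<lambda>x. ln (enn2real (RN_deriv lborel q x)))"

definition free_energy :: "((real^'n::finite) \<Rightarrow> real) \<Rightarrow> (real^'n) measure \<Rightarrow> real" where
  "free_energy U q = energy U q + entropy_neg q"

definition grad :: "('a::real_inner \<Rightarrow> real) \<Rightarrow> 'a \<Rightarrow> 'a" where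
  "grad f x = (SOME g. (f has_derivative (\<lambda>h. g \<bullet> h)) (at x))"

definition bregman :: "('a::real_inner \<Rightarrow> real) \<Rightarrow> 'a \<Rightarrow> 'a \<Rightarrow> real" where
  "bregman f x y = f x - f y - grad f y \<bullet> (x - y)"

end

theory Submission
  imports Defs
begin

lemma Basis_vec_real: "(Basis :: (real^'n) set) = range (\<lambda>i. axis i 1)"
  unfolding Basis_vec_def by auto

lemma inj_axis1: "inj (\<lambda>i::'n::finite. axis i (1::real))"
  by (auto simp: inj_def axis_eq_axis)

lemma T_nth: "(\<Sum>b\<in>(Basis::(real^'n::finite) set). f b *\<^sub>R b) $ i = f (axis i 1)"
proof -
  have "(\<Sum>b\<in>(Basis::(real^'n::finite) set). f b *\<^sub>R b) = (\<Sum>j\<in>UNIV. f (axis j 1) *\<^sub>R axis j (1::real))"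
    unfolding Basis_vec_real by (subst sum.reindex[OF inj_axis1]) simp
  also have "\<dots> $ i = f (axis i 1)"
    by (simp add: axis_def if_distrib cong: if_cong)
  finally show ?thesis .
qed

lemma prod_Basis_vec: "(\<Prod>b\<in>(Basis::(real^'n::finite) set). G b) = (\<Prod>i\<in>UNIV. G (axis i 1))"
  unfolding Basis_vec_real by (subst prod.reindex[OF inj_axis1]) simp

definition mom :: "nat \<Rightarrow> real" where
  "mom k = integral\<^sup>L lborel (\<lambda>t. std_normal_density t * t ^ k)"

lemma gauss_monomial:
  fixes k :: "'n::finite \<Rightarrow> nat"
  shows "integrable std_gauss (\<lambda>z::real^'n. \<Prod>i\<in>UNIV. (z$i)^(k i))"
    and "(\<integral>z. (\<Prod>i\<in>UNIV. (z$i)^(k i)) \<partial>(std_gauss :: (real^'n) measure)) = (\<Prod>i\<in>UNIV. mom (k i))"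
proof -
  define g where "g = (\<lambda>z::real^'n. \<Prod>i\<in>UNIV. std_normal_density (z $ i))"
  define h where "h = (\<lambda>z::real^'n. \<Prod>i\<in>UNIV. (z$i)^(k i))"
  define T where "T = (\<lambda>f. \<Sum>b\<in>(Basis::(real^'n) set). f b *\<^sub>R b)"
  define kk where "kk = (\<lambda>b::real^'n. k (inv (\<lambda>i. axis i (1::real)) b))"
  define FF where "FF = (\<lambda>b t. std_normal_density t * t ^ kk b)"
  have sg: "std_gauss = density lborel g" unfolding std_gauss_def g_def ..
  have gm[measurable]: "g \<in> borel_measurable lborel" unfolding g_def by measurable
  have hm[measurable]: "h \<in> borel_measurable lborel" unfolding h_def by measurable
  have gnn: "AE x in lborel. 0 \<le> g x" unfolding g_def by (auto intro!: prod_nonneg)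
  have Tm[measurable]: "T \<in> measurable (\<Pi>\<^sub>M b\<in>Basis. lborel) borel" 
    unfolding T_def by measurable
  have lb: "lborel = distr (\<Pi>\<^sub>M b\<in>Basis. lborel) borel T" unfolding T_def by (rule lborel_eq)
  have key: "g (T f) *\<^sub>R h (T f) = (\<Prod>b\<in>Basis. FF b (f b))" for f
    unfolding g_def h_def T_def FF_def kk_def prod_Basis_vec T_nth
    by (simp add: inv_f_f[OF inj_axis1] prod.distrib)
  interpret product_sigma_finite "\<lambda>_. lborel" by standard
  have FFi: "integrable lborel (FF b)" for b unfolding FF_def by (rule integrable_std_normal_moment)
  have i1: "integrable (\<Pi>\<^sub>M b\<in>Basis. lborel) (\<lambda>f. \<Prod>b\<in>Basis. FF b (f b))"
    by (rule product_integrable_prod) (auto intro: FFi)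
  have "integrable (density lborel g) h \<longleftrightarrow> integrable lborel (\<lambda>x. g x *\<^sub>R h x)"
    by (rule integrable_density) (auto simp: gnn)
  also have "\<dots> \<longleftrightarrow> integrable (\<Pi>\<^sub>M b\<in>Basis. lborel) (\<lambda>f. g (T f) *\<^sub>R h (T f))"
    by (subst lb, rule integrable_distr_eq) auto
  finally have "integrable (density lborel g) h"
    using i1 by (simp only: key)
  then show "integrable std_gauss (\<lambda>z::real^'n. \<Prod>i\<in>UNIV. (z$i)^(k i))"
    unfolding sg h_def .
  have "integral\<^sup>L (density lborel g) h = integral\<^sup>L lborel (\<lambda>x. g x *\<^sub>R h x)"
    by (rule integral_density) (auto simp: gnn)
  also have "\<dots> = integral\<^sup>L (\<Pi>\<^sub>M b\<in>Basis. lborel) (\<lambda>f. g (T f) *\<^sub>R h (T f))"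
    by (subst lb, rule integral_distr) auto
  also have "\<dots> = (\<Prod>b\<in>Basis. integral\<^sup>L lborel (FF b))"
    unfolding key by (rule product_integral_prod) (auto intro: FFi)
  also have "\<dots> = (\<Prod>i\<in>UNIV. mom (k i))"
    unfolding prod_Basis_vec FF_def kk_def mom_def by (simp add: inv_f_f[OF inj_axis1])
  finally show "(\<integral>z. (\<Prod>i\<in>UNIV. (z$i)^(k i)) \<partial>(std_gauss :: (real^'n) measure)) = (\<Prod>i\<in>UNIV. mom (k i))"
    unfolding sg h_def .
qed

lemma mom0: "mom 0 = 1"
  using integral_std_normal_moment_even[of 0] by (simp add: mom_def)
lemma mom1: "mom 1 = 0"
  using integral_std_normal_moment_odd[of 0] by (simp add: mom_def)
lemma mom1': "mom (Suc 0) = 0"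
  using mom1 by simp
lemma mom2: "mom 2 = 1"
  using integral_std_normal_moment_even[of 1] by (simp add: mom_def)

lemma gauss_one: "integrable (std_gauss :: (real^'n::finite) measure) (\<lambda>z. 1::real)"
    "integral\<^sup>L (std_gauss :: (real^'n::finite) measure) (\<lambda>z. 1::real) = 1"
  using gauss_monomial[of "\<lambda>_. 0"] unfolding power_0 prod.neutral_const mom0 by auto

lemma gauss_const: "integrable (std_gauss :: (real^'n::finite) measure) (\<lambda>z. c::real)"
    "integral\<^sup>L (std_gauss :: (real^'n::finite) measure) (\<lambda>z. c) = c"
proof -
  have "integrable (std_gauss :: (real^'n::finite) measure) (\<lambda>z. c * 1)"
    using gauss_one(1) by (rule integrable_mult_right)
  then show "integrable (std_gauss :: (real^'n::finite) measure) (\<lambda>z. c::real)" by simp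
  have "integral\<^sup>L (std_gauss :: (real^'n::finite) measure) (\<lambda>z. c * 1) = c * 1"
    by (simp only: integral_mult_right_zero gauss_one(2))
  then show "integral\<^sup>L (std_gauss :: (real^'n::finite) measure) (\<lambda>z. c) = c" by simp
qed

lemma gauss_measure: "measure (std_gauss::(real^'n::finite) measure) (space std_gauss) = 1"
  using gauss_one(2)[where 'n='n] by simp

lemma gauss_lin: "integrable (std_gauss :: (real^'n::finite) measure) (\<lambda>z. z$i)"
    "integral\<^sup>L (std_gauss :: (real^'n::finite) measure) (\<lambda>z. z$i) = 0"
proof -
  define k where "k = (\<lambda>l. if l = i then 1 else (0::nat))"
  have e: "(\<Prod>l\<in>UNIV. (z$l)^(k l)) = z$i" for z :: "real^'n"
    unfolding k_def by (simp add: if_distrib prod.If_cases)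
  have p: "(\<Prod>l\<in>UNIV. mom (k l)) = 0"
    unfolding k_def by (simp add: if_distrib prod.If_cases mom0 mom1 mom1')
  show "integrable (std_gauss :: (real^'n::finite) measure) (\<lambda>z. z$i)"
    using gauss_monomial(1)[of k] unfolding e .
  show "integral\<^sup>L (std_gauss :: (real^'n::finite) measure) (\<lambda>z. z$i) = 0"
    using gauss_monomial(2)[of k] unfolding e p .
qed

lemma gauss_quad: "integrable (std_gauss :: (real^'n::finite) measure) (\<lambda>z. z$i * z$j)"
    "integral\<^sup>L (std_gauss :: (real^'n::finite) measure) (\<lambda>z. z$i * z$j) = (if i = j then 1 else 0)"
proof -
  define k where "k = (\<lambda>l. if l = i \<and> l = j then 2 else if l = i \<or> l = j then 1 else (0::nat))"
  have r: "(\<Prod>l\<in>UNIV. G l) = (\<Prod>l\<in>{i,j}. G l)" if "\<And>l. l \<notin> {i,j} \<Longrightarrow> G l = 1" for G :: "'n \<Rightarrow> real"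
    by (rule prod.mono_neutral_right) (use that in auto)
  have e: "(\<Prod>l\<in>UNIV. (z$l)^(k l)) = z$i * z$j" for z :: "real^'n"
    by (subst r) (auto simp: k_def, cases "i = j", simp_all add: power2_eq_square)
  have p: "(\<Prod>l\<in>UNIV. mom (k l)) = (if i = j then 1 else 0)"
    by (subst r) (auto simp: k_def mom0 mom1' mom2)
  show "integrable (std_gauss :: (real^'n::finite) measure) (\<lambda>z. z$i * z$j)"
    using gauss_monomial(1)[of k] unfolding e .
  show "integral\<^sup>L (std_gauss :: (real^'n::finite) measure) (\<lambda>z. z$i * z$j) = (if i = j then 1 else 0)"
    using gauss_monomial(2)[of k] unfolding e p .
qed

lemma sqnorm_vec: "norm (x::real^'n::finite)^2 = (\<Sum>i\<in>UNIV. (x$i)^2)"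
  unfolding power2_norm_eq_inner inner_vec_def by (simp add: power2_eq_square)

lemma sqnorm_mat: "norm (B::real^'n::finite^'m::finite)^2 = (\<Sum>i\<in>UNIV. \<Sum>j\<in>UNIV. (B$i$j)^2)"
  unfolding power2_norm_eq_inner inner_vec_def by (simp add: power2_eq_square)

lemma gauss_sqnorm:
  fixes a :: "real^'m::finite" and B :: "real^'n::finite^'m"
  shows "integrable std_gauss (\<lambda>z. norm (a + B *v z)^2)"
    and "(\<integral>z. norm (a + B *v z)^2 \<partial>std_gauss) = norm a^2 + norm B^2"
proof -
  define F where "F = (\<lambda>z::real^'n. \<Sum>i\<in>UNIV. ((a$i)^2 + (\<Sum>j\<in>UNIV. (2 * a$i * B$i$j) * z$j)
       + (\<Sum>j\<in>UNIV. \<Sum>l\<in>UNIV. (B$i$j * B$i$l) * (z$j * z$l))))"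
  have eq: "norm (a + B *v z)^2 = F z" for z
  proof -
    have "norm (a + B *v z)^2 = (\<Sum>i\<in>UNIV. (a$i + (\<Sum>j\<in>UNIV. B$i$j * z$j))^2)"
      unfolding sqnorm_vec by (simp add: matrix_vector_mult_def)
    also have "\<dots> = F z"
      unfolding F_def
      by (rule sum.cong[OF refl]) (simp add: power2_eq_square algebra_simps sum_distrib_left sum_distrib_right sum_product sum.distrib)
    finally show ?thesis .
  qed
  have ints: "integrable std_gauss (\<lambda>z::real^'n. (a$i)^2 + (\<Sum>j\<in>UNIV. (2 * a$i * B$i$j) * z$j)
       + (\<Sum>j\<in>UNIV. \<Sum>l\<in>UNIV. (B$i$j * B$i$l) * (z$j * z$l)))" for i
    by (simp add: gauss_const gauss_lin gauss_quad)
  show "integrable std_gauss (\<lambda>z. norm (a + B *v z)^2)"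
    unfolding eq F_def by (rule Bochner_Integration.integrable_sum) (rule ints)
  have "(\<integral>z. F z \<partial>std_gauss) = (\<Sum>i\<in>UNIV. ((a$i)^2 + (\<Sum>j\<in>UNIV. (2 * a$i * B$i$j) * 0)
       + (\<Sum>j\<in>UNIV. \<Sum>l\<in>UNIV. (B$i$j * B$i$l) * (if j = l then 1 else 0))))"
    unfolding F_def
    apply (subst Bochner_Integration.integral_sum, rule ints)
    apply (rule sum.cong[OF refl])
    apply (subst Bochner_Integration.integral_add, simp add: gauss_const gauss_lin gauss_quad, simp add: gauss_const gauss_lin gauss_quad)
    apply (subst Bochner_Integration.integral_add, simp add: gauss_const gauss_lin gauss_quad, simp add: gauss_const gauss_lin gauss_quad)
    apply (simp add: gauss_const gauss_lin gauss_quad gauss_measure)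
    done
  also have "\<dots> = norm a^2 + norm B^2"
    unfolding sqnorm_vec sqnorm_mat by (simp add: sum.distrib power2_eq_square if_distrib cong: if_cong)
  finally show "(\<integral>z. norm (a + B *v z)^2 \<partial>std_gauss) = norm a^2 + norm B^2"
    unfolding eq .
qed

lemma line_deriv_U:
  fixes U :: "'a::real_inner \<Rightarrow> real"
  assumes "\<And>z. (U has_derivative (\<lambda>h. gU z \<bullet> h)) (at z)"
  shows "((\<lambda>t. U (x + t *\<^sub>R v)) has_real_derivative (gU (x + t *\<^sub>R v) \<bullet> v)) (at t)"
proof -
  have l: "((\<lambda>t. x + t *\<^sub>R v) has_derivative (\<lambda>s. s *\<^sub>R v)) (at t)"
    by (auto intro!: derivative_eq_intros)
  have "((\<lambda>t. U (x + t *\<^sub>R v)) has_derivative (\<lambda>s. gU (x + t *\<^sub>R v) \<bullet> (s *\<^sub>R v))) (at t)"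
    by (rule has_derivative_compose[OF l assms])
  moreover have "(\<lambda>s. gU (x + t *\<^sub>R v) \<bullet> (s *\<^sub>R v)) = (*) (gU (x + t *\<^sub>R v) \<bullet> v)"
    by (auto simp: fun_eq_iff)
  ultimately show ?thesis by (simp add: has_field_derivative_def)
qed

lemma line_deriv_gU:
  fixes gU :: "real^'n::finite \<Rightarrow> real^'n"
  assumes "\<And>z. (gU has_derivative (\<lambda>h. HU z *v h)) (at z)"
  shows "((\<lambda>t. gU (x + t *\<^sub>R v) \<bullet> v) has_real_derivative (v \<bullet> (HU (x + t *\<^sub>R v) *v v))) (at t)"
proof -
  have l: "((\<lambda>t. x + t *\<^sub>R v) has_derivative (\<lambda>s. s *\<^sub>R v)) (at t)"
    by (auto intro!: derivative_eq_intros)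
  have "((\<lambda>t. gU (x + t *\<^sub>R v)) has_derivative (\<lambda>s. HU (x + t *\<^sub>R v) *v (s *\<^sub>R v))) (at t)"
    by (rule has_derivative_compose[OF l assms])
  then have "((\<lambda>t. gU (x + t *\<^sub>R v) \<bullet> v) has_derivative (\<lambda>s. (HU (x + t *\<^sub>R v) *v (s *\<^sub>R v)) \<bullet> v)) (at t)"
    by (rule has_derivative_inner_left)
  moreover have "(\<lambda>s. (HU (x + t *\<^sub>R v) *v (s *\<^sub>R v)) \<bullet> v) = (*) (v \<bullet> (HU (x + t *\<^sub>R v) *v v))"
    by (auto simp: fun_eq_iff matrix_vector_mult_scaleR inner_commute)
  ultimately show ?thesis by (simp add: has_field_derivative_def)
qed

lemma taylor_bounds:
  fixes U :: "real^'n::finite \<Rightarrow> real" and gU :: "real^'n \<Rightarrow> real^'n"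
  assumes grad_U: "\<And>z. (U has_derivative (\<lambda>h. gU z \<bullet> h)) (at z)"
    and hess_U: "\<And>z. (gU has_derivative (\<lambda>h. HU z *v h)) (at z)"
    and hess_bounds: "\<And>z h. \<mu> * (norm h)^2 \<le> h \<bullet> (HU z *v h) \<and> h \<bullet> (HU z *v h) \<le> L * (norm h)^2"
  shows "\<mu> / 2 * norm v ^ 2 \<le> U (x + v) - U x - gU x \<bullet> v \<and> U (x + v) - U x - gU x \<bullet> v \<le> L / 2 * norm v ^ 2"
proof
  define p where "p = (\<lambda>t. gU (x + t *\<^sub>R v) \<bullet> v - \<mu> * t * norm v ^ 2)"
  have p_mono: "p 0 \<le> p t" if "0 \<le> t" for t
  proof (rule DERIV_nonneg_imp_nondecreasing[OF that])
    fix s assume "0 \<le> s" "s \<le> t"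
    show "\<exists>y. (p has_real_derivative y) (at s) \<and> 0 \<le> y"
    proof -
      have d:  "((\<lambda>t. gU (x + t *\<^sub>R v) \<bullet> v - \<mu> * t * norm v ^ 2) has_real_derivative
          (v \<bullet> (HU (x + s *\<^sub>R v) *v v) - \<mu> * norm v ^ 2)) (at s)"
        by (auto intro!: derivative_eq_intros line_deriv_gU[OF hess_U])
      have nn: "0 \<le> v \<bullet> (HU (x + s *\<^sub>R v) *v v) - \<mu> * norm v ^ 2"
        using hess_bounds[where z="x + s *\<^sub>R v" and h=v] by simp
      show ?thesis using d nn unfolding p_def by blast
    qed
  qed
  define k where "k = (\<lambda>t. U (x + t *\<^sub>R v) - U x - t * (gU x \<bullet> v) - \<mu> / 2 * t^2 * norm v ^ 2)"
  have "k 0 \<le> k 1"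
  proof (rule DERIV_nonneg_imp_nondecreasing[of 0 1 k])
    fix s :: real assume s: "0 \<le> s" "s \<le> 1"
    show "\<exists>y. (k has_real_derivative y) (at s) \<and> 0 \<le> y"
    proof -
      have d:  "((\<lambda>t. U (x + t *\<^sub>R v) - U x - t * (gU x \<bullet> v) - \<mu> / 2 * t^2 * norm v ^ 2) has_real_derivative
         (gU (x + s *\<^sub>R v) \<bullet> v - gU x \<bullet> v - \<mu> * s * norm v ^ 2)) (at s)"
        by (auto intro!: derivative_eq_intros line_deriv_U[OF grad_U] simp: algebra_simps)
      have nn: "0 \<le> gU (x + s *\<^sub>R v) \<bullet> v - gU x \<bullet> v - \<mu> * s * norm v ^ 2"
        using p_mono[OF s(1)] by (simp add: p_def algebra_simps)
      show ?thesis using d nn unfolding k_def by blast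
    qed
  qed simp
  then show "\<mu> / 2 * norm v ^ 2 \<le> U (x + v) - U x - gU x \<bullet> v" by (simp add: k_def)
next
  define p where "p = (\<lambda>t. L * t * norm v ^ 2 - gU (x + t *\<^sub>R v) \<bullet> v)"
  have p_mono: "p 0 \<le> p t" if "0 \<le> t" for t
  proof (rule DERIV_nonneg_imp_nondecreasing[OF that])
    fix s assume "0 \<le> s" "s \<le> t"
    show "\<exists>y. (p has_real_derivative y) (at s) \<and> 0 \<le> y"
    proof -
      have d:  "((\<lambda>t. L * t * norm v ^ 2 - gU (x + t *\<^sub>R v) \<bullet> v) has_real_derivative
          (L * norm v ^ 2 - v \<bullet> (HU (x + s *\<^sub>R v) *v v))) (at s)"
        by (auto intro!: derivative_eq_intros line_deriv_gU[OF hess_U])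
      have nn: "0 \<le> L * norm v ^ 2 - v \<bullet> (HU (x + s *\<^sub>R v) *v v)"
        using hess_bounds[where z="x + s *\<^sub>R v" and h=v] by simp
      show ?thesis using d nn unfolding p_def by blast
    qed
  qed
  define k where "k = (\<lambda>t. L / 2 * t^2 * norm v ^ 2 - U (x + t *\<^sub>R v) + U x + t * (gU x \<bullet> v))"
  have "k 0 \<le> k 1"
  proof (rule DERIV_nonneg_imp_nondecreasing[of 0 1 k])
    fix s :: real assume s: "0 \<le> s" "s \<le> 1"
    show "\<exists>y. (k has_real_derivative y) (at s) \<and> 0 \<le> y"
    proof -
      have d:  "((\<lambda>t. L / 2 * t^2 * norm v ^ 2 - U (x + t *\<^sub>R v) + U x + t * (gU x \<bullet> v)) has_real_derivative
         (L * s * norm v ^ 2 - gU (x + s *\<^sub>R v) \<bullet> v + gU x \<bullet> v)) (at s)"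
        by (auto intro!: derivative_eq_intros line_deriv_U[OF grad_U] simp: algebra_simps)
      have nn: "0 \<le> L * s * norm v ^ 2 - gU (x + s *\<^sub>R v) \<bullet> v + gU x \<bullet> v"
        using p_mono[OF s(1)] by (simp add: p_def algebra_simps)
      show ?thesis using d nn unfolding k_def by blast
    qed
  qed simp
  then show "U (x + v) - U x - gU x \<bullet> v \<le> L / 2 * norm v ^ 2" by (simp add: k_def)
qed

lemma grad_growth:
  fixes U :: "'a::real_inner \<Rightarrow> real"
  assumes TB: "\<And>x v. \<mu> / 2 * norm v ^ 2 \<le> U (x + v) - U x - gU x \<bullet> v \<and> U (x + v) - U x - gU x \<bullet> v \<le> L / 2 * norm v ^ 2"
    and mu: "\<mu> \<ge> 0" and L: "L \<ge> 0"
  shows "norm (gU x) \<le> norm (gU 0) + 2 * L * (1 + norm x)"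
proof (cases "gU x = 0")
  case True then show ?thesis using L by simp
next
  case False
  define t where "t = 1 + norm x"
  have t: "t > 0" unfolding t_def by (simp add: add_pos_nonneg)
  define w where "w = (t / norm (gU x)) *\<^sub>R gU x"
  have nw: "norm w = t" unfolding w_def using False t by simp
  have gw: "gU x \<bullet> w = t * norm (gU x)"
    unfolding w_def using False by (simp add: power2_norm_eq_inner[symmetric] power2_eq_square)
  have A: "0 \<le> U (x + w) - U x - gU x \<bullet> w"
  proof -
    have "0 \<le> \<mu> / 2 * norm w ^ 2" using mu by simp
    then show ?thesis using TB[where x=x and v=w] by linarith
  qed
  have B: "U (0 + (x + w)) - U 0 - gU 0 \<bullet> (x + w) \<le> L / 2 * norm (x + w) ^ 2"
    using TB[where x=0 and v="x + w"] by blast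
  have C: "0 \<le> U (0 + x) - U 0 - gU 0 \<bullet> x"
  proof -
    have "0 \<le> \<mu> / 2 * norm x ^ 2" using mu by simp
    then show ?thesis using TB[where x=0 and v=x] by linarith
  qed
  have D: "gU 0 \<bullet> w \<le> norm (gU 0) * t"
    using norm_cauchy_schwarz[of "gU 0" w] nw by simp
  have E: "norm (x + w) ^ 2 \<le> (2 * t) ^ 2"
  proof -
    have "norm (x + w) \<le> 2 * t" using norm_triangle_ineq[of x w] nw unfolding t_def by simp
    then show ?thesis by (intro power_mono) auto
  qed
  have "t * norm (gU x) \<le> norm (gU 0) * t + L / 2 * (2 * t) ^ 2"
  proof -
    have "L / 2 * norm (x + w) ^ 2 \<le> L / 2 * (2 * t) ^ 2" using E L by (intro mult_left_mono) auto
    then show ?thesis using A B C D gw by (simp add: inner_add_right)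
  qed
  then have "t * norm (gU x) \<le> t * (norm (gU 0) + 2 * L * t)"
    by (simp add: algebra_simps power2_eq_square)
  then show ?thesis using t unfolding t_def by simp
qed

lemma U_growth:
  fixes U :: "'a::real_inner \<Rightarrow> real"
  assumes TB: "\<And>x v. \<mu> / 2 * norm v ^ 2 \<le> U (x + v) - U x - gU x \<bullet> v \<and> U (x + v) - U x - gU x \<bullet> v \<le> L / 2 * norm v ^ 2"
    and mu: "\<mu> \<ge> 0"
  shows "\<bar>U y\<bar> \<le> \<bar>U 0\<bar> + norm (gU 0) * norm y + L / 2 * norm y ^ 2"
proof -
  have a: "0 \<le> U y - U 0 - gU 0 \<bullet> y" "U y - U 0 - gU 0 \<bullet> y \<le> L / 2 * norm y ^ 2"
  proof -
    have "0 \<le> \<mu> / 2 * norm y ^ 2" using mu by simp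
    then show "0 \<le> U y - U 0 - gU 0 \<bullet> y" "U y - U 0 - gU 0 \<bullet> y \<le> L / 2 * norm y ^ 2"
      using TB[where x=0 and v=y] by simp_all
  qed
  have "\<bar>gU 0 \<bullet> y\<bar> \<le> norm (gU 0) * norm y" by (rule Cauchy_Schwarz_ineq2)
  then show ?thesis using a by linarith
qed

lemma sets_std_gauss[measurable_cong]: "sets (std_gauss :: (real^'n::finite) measure) = sets borel"
  unfolding std_gauss_def by simp

lemma cont_meas_gauss:
  fixes f :: "real^'n::finite \<Rightarrow> 'b::topological_space"
  assumes "continuous_on UNIV f"
  shows "f \<in> borel_measurable std_gauss"
proof -
  have "f \<in> borel_measurable borel" by (rule borel_measurable_continuous_onI[OF assms])
  then show ?thesis using measurable_cong_sets[OF sets_std_gauss refl] by blast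
qed

lemma gauss_sqnorm_z: "integrable (std_gauss :: (real^'n::finite) measure) (\<lambda>z. norm z ^ 2)"
  using gauss_sqnorm(1)[of 0 "mat 1 :: real^'n^'n"] by simp

lemma gauss_dom:
  fixes f :: "real^'n::finite \<Rightarrow> 'b::{banach,second_countable_topology}"
  assumes c: "continuous_on UNIV f" and b: "\<And>z. norm (f z) \<le> K * (1 + norm z ^ 2)"
  shows "integrable std_gauss f"
proof (rule Bochner_Integration.integrable_bound)
  show "integrable std_gauss (\<lambda>z::real^'n. K * 1 + K * norm z ^ 2)"
    by (intro Bochner_Integration.integrable_add integrable_mult_right gauss_const gauss_sqnorm_z)
  show "f \<in> borel_measurable std_gauss" by (rule cont_meas_gauss[OF c])
  show "AE z in std_gauss. norm (f z) \<le> norm (K * 1 + K * norm z ^ 2)"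
  proof (rule AE_I2)
    fix z :: "real^'n"
    have "norm (f z) \<le> K * 1 + K * norm z ^ 2" using b[of z] by (simp add: algebra_simps)
    then show "norm (f z) \<le> norm (K * 1 + K * norm z ^ 2)" by simp
  qed
qed

lemma norm_mv: "norm ((C::real^'n::finite^'m::finite) *v z) \<le> norm C * norm z"
proof -
  have "norm (C *v z) ^ 2 = (\<Sum>i\<in>UNIV. (C$i \<bullet> z)^2)"
    unfolding sqnorm_vec by (simp add: matrix_vector_mul_component)
  also have "\<dots> \<le> (\<Sum>i\<in>UNIV. norm (C$i)^2 * norm z ^2)"
  proof (rule sum_mono)
    fix i
    have "\<bar>C$i \<bullet> z\<bar> \<le> norm (C$i) * norm z" by (rule Cauchy_Schwarz_ineq2)
    then have "\<bar>C$i \<bullet> z\<bar>^2 \<le> (norm (C$i) * norm z)^2" by (intro power_mono) auto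
    then show "(C$i \<bullet> z)^2 \<le> norm (C$i)^2 * norm z ^2" by (simp add: power_mult_distrib)
  qed
  also have "\<dots> = (norm C * norm z)^2"
    by (simp add: power_mult_distrib sum_distrib_right[symmetric] power2_norm_eq_inner inner_vec_def)
  finally show ?thesis by (rule power2_le_imp_le) simp
qed

lemma poly_dom:
  fixes r y A B D a c :: real
  assumes "0 \<le> r" "0 \<le> A" "0 \<le> B" "0 \<le> D" "0 \<le> a" "0 \<le> c" "y \<le> a + c * r" "0 \<le> y"
  shows "A + B * y + D * y^2 \<le> (A + B * (a + c) + 2 * D * (a^2 + c^2)) * (1 + r^2)"
proof -
  have r1: "r \<le> 1 + r^2"
  proof -
    have "0 \<le> (r - 1)^2" by simp
    then have "2 * r \<le> 1 + r^2" by (simp add: power2_eq_square algebra_simps)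
    then show ?thesis using assms(1) by linarith
  qed
  have "y^2 \<le> (a + c * r)^2" using assms by (intro power_mono) auto
  also have "\<dots> \<le> 2 * (a^2 + c^2 * r^2)"
  proof -
    have "0 \<le> (a - c * r)^2" by simp
    then show ?thesis by (simp add: power2_eq_square algebra_simps)
  qed
  also have "\<dots> \<le> 2 * (a^2 + c^2) * (1 + r^2)" using assms by (simp add: algebra_simps)
  finally have y2: "D * y^2 \<le> D * (2 * (a^2 + c^2) * (1 + r^2))" using assms by (intro mult_left_mono) auto
  have "B * y \<le> B * (a + c * r)" using assms by (intro mult_left_mono) auto
  also have "\<dots> \<le> B * ((a + c) * (1 + r^2))"
  proof (intro mult_left_mono)
    have "c * r \<le> c * (1 + r^2)" using r1 assms by (intro mult_left_mono) auto
    moreover have "a \<le> a * (1 + r^2)" using assms by (simp add: algebra_simps)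
    ultimately show "a + c * r \<le> (a + c) * (1 + r^2)" by (simp add: algebra_simps)
  qed (use assms in auto)
  finally have "B * y \<le> B * ((a + c) * (1 + r^2))" .
  moreover have "A \<le> A * (1 + r^2)" using assms by (simp add: algebra_simps)
  ultimately show ?thesis using y2 by (simp add: algebra_simps)
qed

definition xz :: "(real^'n::finite) \<times> (real^'n^'n) \<Rightarrow> real^'n \<Rightarrow> real^'n" where
  "xz lam z = fst lam + snd lam *v z"

definition Ef :: "(real^'n::finite \<Rightarrow> real) \<Rightarrow> (real^'n) \<times> (real^'n^'n) \<Rightarrow> real" where
  "Ef U lam = (\<integral>z. U (xz lam z) \<partial>std_gauss)"

definition Gz :: "(real^'n::finite \<Rightarrow> real^'n) \<Rightarrow> (real^'n) \<times> (real^'n^'n) \<Rightarrow> real^'n \<Rightarrow> (real^'n) \<times> (real^'n^'n)" where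
  "Gz gU lam z = (gU (xz lam z), \<chi> i. gU (xz lam z) $ i *\<^sub>R z)"

definition Gv :: "(real^'n::finite \<Rightarrow> real^'n) \<Rightarrow> (real^'n) \<times> (real^'n^'n) \<Rightarrow> (real^'n) \<times> (real^'n^'n)" where
  "Gv gU lam = integral\<^sup>L std_gauss (Gz gU lam)"

lemma xz_add: "xz (lam + h) z = xz lam z + xz h z"
  unfolding xz_def by (simp add: matrix_vector_mult_add_rdistrib)

lemma xz_diff: "xz (lam - h) z = xz lam z - xz h z"
  unfolding xz_def by (simp add: matrix_vector_mult_diff_rdistrib)

lemma norm_xz: "norm (xz lam z) \<le> norm (fst lam) + norm (snd lam) * norm z"
  unfolding xz_def using norm_triangle_ineq[of "fst lam" "snd lam *v z"] norm_mv[of "snd lam" z] by linarith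

lemma cont_xz: "continuous_on UNIV (xz lam)"
  unfolding xz_def
  by (intro continuous_on_add continuous_on_const linear_continuous_on matrix_vector_mul_bounded_linear)

lemma outer_inner: "(\<chi> i. (g::real^'n::finite) $ i *\<^sub>R (z::real^'m::finite)) \<bullet> B = g \<bullet> (B *v z)"
proof -
  have "(\<chi> i. g $ i *\<^sub>R z) \<bullet> B = (\<Sum>i\<in>UNIV. (g $ i *\<^sub>R z) \<bullet> B $ i)"
    by (subst inner_vec_def) simp
  also have "\<dots> = (\<Sum>i\<in>UNIV. g $ i * (B *v z) $ i)"
    by (simp add: matrix_vector_mul_component inner_commute)
  also have "\<dots> = g \<bullet> (B *v z)"
    by (simp add: inner_vec_def)
  finally show ?thesis .
qed

lemma Gz_inner: "Gz gU lam z \<bullet> h = gU (xz lam z) \<bullet> xz h z"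
  unfolding Gz_def xz_def inner_prod_def by (simp add: outer_inner inner_add_right)

lemma norm_outer: "norm (\<chi> i. (g::real^'n::finite) $ i *\<^sub>R (z::real^'m::finite)) \<le> norm g * norm z"
proof -
  have "norm (\<chi> i. g $ i *\<^sub>R z) ^ 2 = (\<Sum>i\<in>UNIV. \<Sum>j\<in>UNIV. (g$i)^2 * (z$j)^2)"
    unfolding sqnorm_mat by (simp only: vec_lambda_beta vector_scaleR_component power_mult_distrib real_scaleR_def)
  also have "\<dots> = (\<Sum>i\<in>UNIV. (g$i)^2 * (\<Sum>j\<in>UNIV. (z$j)^2))"
    by (simp only: sum_distrib_left)
  also have "\<dots> = (\<Sum>i\<in>UNIV. (g$i)^2) * (\<Sum>j\<in>UNIV. (z$j)^2)"
    by (simp only: sum_distrib_right)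
  also have "\<dots> = (norm g * norm z) ^ 2"
    by (simp only: sqnorm_vec power_mult_distrib)
  finally have e: "norm (\<chi> i. g $ i *\<^sub>R z) ^ 2 = (norm g * norm z) ^ 2" .
  show ?thesis by (rule power2_le_imp_le) (simp_all only: e order_refl, simp)
qed

lemma norm_Gz: "norm (Gz gU lam z) \<le> norm (gU (xz lam z)) * (1 + norm z)"
proof -
  have "norm (Gz gU lam z) \<le> norm (gU (xz lam z)) + norm (\<chi> i. gU (xz lam z) $ i *\<^sub>R z)"
    unfolding Gz_def by (rule norm_Pair_le)
  also have "\<dots> \<le> norm (gU (xz lam z)) + norm (gU (xz lam z)) * norm z"
    using norm_outer by (intro add_left_mono) auto
  finally show ?thesis by (simp add: algebra_simps)
qed

lemma poly_dom2:
  fixes r P Q :: real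
  assumes "0 \<le> r" "0 \<le> P" "0 \<le> Q"
  shows "(P + Q * r) * (1 + r) \<le> (2 * P + 2 * Q) * (1 + r^2)"
proof -
  have r1: "r \<le> 1 + r^2"
  proof -
    have "0 \<le> (r - 1)^2" by simp
    then have "2 * r \<le> 1 + r^2" by (simp add: power2_eq_square algebra_simps)
    then show ?thesis using assms(1) by linarith
  qed
  have "(P + Q) * r \<le> (P + Q) * (1 + r^2)" using r1 assms by (intro mult_left_mono) auto
  moreover have "Q * r^2 \<le> Q * (1 + r^2)" using assms by (intro mult_left_mono) auto
  moreover have "P \<le> P * (1 + r^2)" using assms by (simp add: algebra_simps)
  ultimately show ?thesis by (simp add: algebra_simps power2_eq_square)
qed

locale vi =
  fixes U :: "real^'n::finite \<Rightarrow> real" and gU :: "real^'n \<Rightarrow> real^'n" and \<mu> L :: real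
  assumes dU: "\<And>z. (U has_derivative (\<lambda>h. gU z \<bullet> h)) (at z)"
    and cg: "\<And>z. isCont gU z"
    and mu: "0 \<le> \<mu>" and Lnn: "0 \<le> L"
    and TB: "\<And>x v. \<mu> / 2 * norm v ^ 2 \<le> U (x + v) - U x - gU x \<bullet> v \<and> U (x + v) - U x - gU x \<bullet> v \<le> L / 2 * norm v ^ 2"
begin

lemma contU: "continuous_on UNIV U"
  by (intro continuous_at_imp_continuous_on ballI has_derivative_continuous[OF dU])

lemma contG: "continuous_on UNIV gU"
  by (intro continuous_at_imp_continuous_on ballI cg)

lemma intU: "integrable std_gauss (\<lambda>z. U (xz lam z))"
proof (rule gauss_dom[where K = "\<bar>U 0\<bar> + norm (gU 0) * (norm (fst lam) + norm (snd lam)) + 2 * (L / 2) * (norm (fst lam)^2 + norm (snd lam)^2)"])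
  show "continuous_on UNIV (\<lambda>z. U (xz lam z))"
    by (rule continuous_on_compose2[OF contU cont_xz]) auto
  fix z
  have "\<bar>U (xz lam z)\<bar> \<le> \<bar>U 0\<bar> + norm (gU 0) * norm (xz lam z) + L / 2 * norm (xz lam z) ^ 2"
    by (rule U_growth[OF TB mu])
  also have "\<dots> \<le> (\<bar>U 0\<bar> + norm (gU 0) * (norm (fst lam) + norm (snd lam)) + 2 * (L / 2) * (norm (fst lam)^2 + norm (snd lam)^2)) * (1 + norm z ^ 2)"
    by (rule poly_dom) (auto simp: norm_xz Lnn)
  finally show "norm (U (xz lam z)) \<le> (\<bar>U 0\<bar> + norm (gU 0) * (norm (fst lam) + norm (snd lam)) + 2 * (L / 2) * (norm (fst lam)^2 + norm (snd lam)^2)) * (1 + norm z ^ 2)"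
    by simp
qed

lemma contGx: "continuous_on UNIV (\<lambda>z. gU (xz lam z))"
  by (rule continuous_on_compose2[OF contG cont_xz]) auto

lemma intG: "integrable std_gauss (Gz gU lam)"
proof (rule gauss_dom[where K = "2 * (norm (gU 0) + 2 * L * (1 + norm (fst lam))) + 2 * (2 * L * norm (snd lam))"])
  show "continuous_on UNIV (Gz gU lam)"
    unfolding Gz_def by (intro continuous_intros contGx)
  fix z
  have "norm (Gz gU lam z) \<le> norm (gU (xz lam z)) * (1 + norm z)" by (rule norm_Gz)
  also have "\<dots> \<le> ((norm (gU 0) + 2 * L * (1 + norm (fst lam))) + (2 * L * norm (snd lam)) * norm z) * (1 + norm z)"
  proof (rule mult_right_mono)
    have "norm (gU (xz lam z)) \<le> norm (gU 0) + 2 * L * (1 + norm (xz lam z))"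
      by (rule grad_growth[OF TB mu Lnn])
    also have "\<dots> \<le> norm (gU 0) + 2 * L * (1 + (norm (fst lam) + norm (snd lam) * norm z))"
      using norm_xz[of lam z] Lnn by (intro add_left_mono mult_left_mono) auto
    finally show "norm (gU (xz lam z)) \<le> (norm (gU 0) + 2 * L * (1 + norm (fst lam))) + (2 * L * norm (snd lam)) * norm z"
      by (simp add: algebra_simps)
  qed simp
  also have "\<dots> \<le> (2 * (norm (gU 0) + 2 * L * (1 + norm (fst lam))) + 2 * (2 * L * norm (snd lam))) * (1 + norm z ^ 2)"
    by (rule poly_dom2) (auto simp: Lnn)
  finally show "norm (Gz gU lam z) \<le> (2 * (norm (gU 0) + 2 * L * (1 + norm (fst lam))) + 2 * (2 * L * norm (snd lam))) * (1 + norm z ^ 2)" .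
qed

lemma int_lin: "integrable std_gauss (\<lambda>z. gU (xz lam z) \<bullet> xz h z)"
proof -
  have "integrable std_gauss (\<lambda>z. Gz gU lam z \<bullet> h)" using intG by (rule integrable_inner_left)
  then show ?thesis by (simp only: Gz_inner)
qed

lemma int_sq: "integrable std_gauss (\<lambda>z. norm (xz h z) ^ 2)"
  unfolding xz_def by (rule gauss_sqnorm(1))

lemma integral_sq: "(\<integral>z. norm (xz h z) ^ 2 \<partial>std_gauss) = norm h ^ 2"
  unfolding xz_def gauss_sqnorm(2) norm_prod_def by simp

lemma core:
  "\<mu> / 2 * norm h ^ 2 \<le> Ef U (lam + h) - Ef U lam - Gv gU lam \<bullet> h \<and>
   Ef U (lam + h) - Ef U lam - Gv gU lam \<bullet> h \<le> L / 2 * norm h ^ 2"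
proof -
  define R where "R = (\<lambda>z. U (xz lam z + xz h z) - U (xz lam z) - gU (xz lam z) \<bullet> xz h z)"
  have i1: "integrable std_gauss (\<lambda>z. U (xz lam z + xz h z))"
    using intU[of "lam + h"] by (simp only: xz_add)
  have iR: "integrable std_gauss R"
    unfolding R_def by (intro Bochner_Integration.integrable_diff i1 intU int_lin)
  have "Gv gU lam \<bullet> h = (\<integral>z. Gz gU lam z \<bullet> h \<partial>std_gauss)"
    unfolding Gv_def by (rule integral_inner_left[symmetric]) (rule intG)
  also have "\<dots> = (\<integral>z. gU (xz lam z) \<bullet> xz h z \<partial>std_gauss)"
    by (simp only: Gz_inner)
  finally have gv: "Gv gU lam \<bullet> h = (\<integral>z. gU (xz lam z) \<bullet> xz h z \<partial>std_gauss)" .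
  have eq: "Ef U (lam + h) - Ef U lam - Gv gU lam \<bullet> h = integral\<^sup>L std_gauss R"
    unfolding R_def gv Ef_def xz_add
    by (simp add: Bochner_Integration.integral_diff i1 intU int_lin Bochner_Integration.integrable_diff)
  have lo: "(\<integral>z. \<mu> / 2 * norm (xz h z) ^ 2 \<partial>std_gauss) \<le> integral\<^sup>L std_gauss R"
    by (rule Bochner_Integration.integral_mono[OF integrable_mult_right[OF int_sq] iR])
       (use TB in \<open>simp add: R_def\<close>)
  have hi: "integral\<^sup>L std_gauss R \<le> (\<integral>z. L / 2 * norm (xz h z) ^ 2 \<partial>std_gauss)"
    by (rule Bochner_Integration.integral_mono[OF iR integrable_mult_right[OF int_sq]])
       (use TB in \<open>simp add: R_def\<close>)
  show ?thesis
    using lo hi unfolding eq integral_mult_right_zero integral_sq by simp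
qed

lemma deriv: "(Ef U has_derivative (\<lambda>h. Gv gU lam \<bullet> h)) (at lam)"
  unfolding has_derivative_iff_norm
proof
  show "bounded_linear (\<lambda>h. Gv gU lam \<bullet> h)" by (rule bounded_linear_inner_right)
  show "((\<lambda>y. norm (Ef U y - Ef U lam - Gv gU lam \<bullet> (y - lam)) / norm (y - lam)) \<longlongrightarrow> 0) (at lam)"
  proof (rule Lim_null_comparison)
    show "\<forall>\<^sub>F y in at lam. norm (norm (Ef U y - Ef U lam - Gv gU lam \<bullet> (y - lam)) / norm (y - lam)) \<le> L / 2 * norm (y - lam)"
    proof (rule always_eventually, rule allI)
      fix y
      have c: "\<bar>Ef U y - Ef U lam - Gv gU lam \<bullet> (y - lam)\<bar> \<le> L / 2 * norm (y - lam) ^ 2"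
      proof -
        have cc: "\<mu> / 2 * norm (y - lam) ^ 2 \<le> Ef U y - Ef U lam - Gv gU lam \<bullet> (y - lam) \<and>
           Ef U y - Ef U lam - Gv gU lam \<bullet> (y - lam) \<le> L / 2 * norm (y - lam) ^ 2"
          using core[where lam=lam and h="y - lam"] by simp
        have "0 \<le> \<mu> / 2 * norm (y - lam) ^ 2" using mu by simp
        then show ?thesis using cc by linarith
      qed
      show "norm (norm (Ef U y - Ef U lam - Gv gU lam \<bullet> (y - lam)) / norm (y - lam)) \<le> L / 2 * norm (y - lam)"
      proof (cases "y = lam")
        case True then show ?thesis by simp
      next
        case False
        then have p: "norm (y - lam) > 0" by simp
        have "\<bar>Ef U y - Ef U lam - Gv gU lam \<bullet> (y - lam)\<bar> / norm (y - lam) \<le> L / 2 * norm (y - lam)"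
          using c p by (simp add: divide_le_eq power2_eq_square mult.assoc)
        then show ?thesis by simp
      qed
    qed
    have "((\<lambda>y. L / 2 * norm (y - lam)) \<longlongrightarrow> L / 2 * norm (lam - lam)) (at lam)"
      by (intro tendsto_intros)
    then show "((\<lambda>y. L / 2 * norm (y - lam)) \<longlongrightarrow> 0) (at lam)" by simp
  qed
qed

lemma grad_eq: "grad (Ef U) lam = Gv gU lam"
proof -
  have ex: "\<exists>g. (Ef U has_derivative (\<lambda>h. g \<bullet> h)) (at lam)" using deriv by blast
  define g where "g = grad (Ef U) lam"
  have dg: "(Ef U has_derivative (\<lambda>h. g \<bullet> h)) (at lam)"
    unfolding g_def grad_def by (rule someI_ex[OF ex])
  have fe: "(\<lambda>h. g \<bullet> h) = (\<lambda>h. Gv gU lam \<bullet> h)" by (rule has_derivative_unique[OF dg deriv])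
  have "(g - Gv gU lam) \<bullet> (g - Gv gU lam) = 0"
    using fun_cong[OF fe, of "g - Gv gU lam"] by (simp add: inner_diff_left)
  then show ?thesis unfolding g_def by simp
qed

lemma energy_eq: "energy U (q_param lam) = Ef U lam"
proof -
  have q: "q_param lam = distr std_gauss borel (xz lam)"
    unfolding q_param_def xz_def by (simp add: fun_eq_iff)
  show ?thesis
    unfolding energy_def q Ef_def
    by (rule integral_distr[OF cont_meas_gauss[OF cont_xz] borel_measurable_continuous_onI[OF contU]])
qed

end

theorem lemma3p9:
  fixes U :: "real^('n::{finite,wellorder}) \<Rightarrow> real"
    and gU :: "real^('n::{finite,wellorder}) \<Rightarrow> real^('n::{finite,wellorder})"
    and HU :: "real^('n::{finite,wellorder}) \<Rightarrow> real^('n::{finite,wellorder})^('n::{finite,wellorder})"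
    and \<mu> L :: real
    and lam lam_star :: "(real^('n::{finite,wellorder})) \<times> (real^('n::{finite,wellorder})^('n::{finite,wellorder}))"
  assumes mu_pos: "\<mu> > 0" and L_nonneg: "L \<ge> 0"
    and grad_U: "\<And>z. (U has_derivative (\<lambda>h. gU z \<bullet> h)) (at z)"
    and hess_U: "\<And>z. (gU has_derivative (\<lambda>h. HU z *v h)) (at z)"
    and hess_bounds: "\<And>z h. \<mu> * (norm h)^2 \<le> h \<bullet> (HU z *v h) \<and> h \<bullet> (HU z *v h) \<le> L * (norm h)^2"
    and lam_in: "lam \<in> Lambda_set"
    and star_in: "lam_star \<in> Lambda_set"
    and star_min: "\<And>l. l \<in> Lambda_set \<Longrightarrow>
                     free_energy U (q_param lam_star) \<le> free_energy U (q_param l)"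
  shows "(grad (\<lambda>l. energy U (q_param l)) lam - grad (\<lambda>l. energy U (q_param l)) lam_star) \<bullet> (lam - lam_star)
         \<ge> \<mu> / 2 * (norm (lam - lam_star))^2 + bregman (\<lambda>l. energy U (q_param l)) lam lam_star"
proof -
  have TB: "\<And>x v. \<mu> / 2 * norm v ^ 2 \<le> U (x + v) - U x - gU x \<bullet> v \<and> U (x + v) - U x - gU x \<bullet> v \<le> L / 2 * norm v ^ 2"
    by (rule taylor_bounds[OF grad_U hess_U hess_bounds])
  have cg: "\<And>z. isCont gU z"
    using hess_U by (rule has_derivative_continuous)
  interpret vi U gU \<mu> L
    by unfold_locales (use grad_U cg mu_pos L_nonneg TB in auto)
  have fe: "(\<lambda>l. energy U (q_param l)) = Ef U" by (rule ext) (rule energy_eq)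
  have c: "\<mu> / 2 * norm (lam_star - lam) ^ 2 \<le> Ef U lam_star - Ef U lam - Gv gU lam \<bullet> (lam_star - lam)"
    using core[where lam=lam and h="lam_star - lam"] by simp
  have n: "norm (lam_star - lam) = norm (lam - lam_star)" by (rule norm_minus_commute)
  have i: "Gv gU lam \<bullet> (lam_star - lam) = - (Gv gU lam \<bullet> (lam - lam_star))"
    by (metis inner_minus_right minus_diff_eq)
  show ?thesis
    unfolding fe bregman_def grad_eq inner_diff_left
    using c unfolding n i by linarith
qed

end
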